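(* Let $\Sigma_1\subset E(1,1)$ be a regular surface and $\gamma=(\gamma_1,\gamma_2,\gamma_3):[a,b]\to\Sigma_1$ a Euclidean $C^2$-smooth regular curve; let $t\in[a,b]$ be such that $\gamma(t)$ is non-characteristic, with $\bar p,\bar q$ evaluated at $\gamma(t)$. Set $B=-e^{-\gamma_3}\dot\gamma_1+e^{\gamma_3}\dot\gamma_2$ and $\omega(\dot\gamma(t))=-\frac{\sqrt2}{2}(e^{-\gamma_3}\dot\gamma_1+e^{\gamma_3}\dot\gamma_2)$. (i) If $\omega(\dot\gamma(t))\ne0$, then $k^{\infty,s}_{\gamma,\Sigma_1}=\lim_{L\to+\infty}k^{L,s}_{\gamma,\Sigma_1}$ exists and equals $\dfrac{\bar p\dot\gamma_3+\frac{\sqrt2}{2}\bar q B}{|\omega(\dot\gamma(t))|}$. (ii) If $\omega(\dot\gamma(t))=0$ and $\frac{d}{dt}\omega(\dot\gamma(t))=0$, then $k^{\infty,s}_{\gamma,\Sigma_1}=0$. (iii) If $\omega(\dot\gamma(t))=0$ and $\frac{d}{dt}\omega(\dot\gamma(t))\ne0$, then $$\lim_{L\to+\infty}\frac{k^{L,s}_{\gamma,\Sigma_1}}{\sqrt L}=\frac{\big(-\bar q\dot\gamma_3+\frac{\sqrt2}{2}\bar pB\big)\frac{d}{dt}\omega(\dot\gamma(t))}{\big|\bar q\dot\gamma_3-\frac{\sqrt2}{2}\bar pB\big|^3}.$$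
   Context: $E(1,1)$ is modelled on $\mathbb R^3$ with coordinates $(x_1,x_2,x_3)$ and vector fields $X_1=\partial_{x_3}$, $X_2=\frac{1}{\sqrt2}(-e^{x_3}\partial_{x_1}+e^{-x_3}\partial_{x_2})$, $X_3=-\frac1{\sqrt2}(e^{x_3}\partial_{x_1}+e^{-x_3}\partial_{x_2})$, dual forms $\omega_1=dx_3$, $\omega_2=\frac1{\sqrt2}(-e^{-x_3}dx_1+e^{x_3}dx_2)$, $\omega=-\frac1{\sqrt2}(e^{-x_3}dx_1+e^{x_3}dx_2)$. For $L>0$, $g_L=\omega_1\otimes\omega_1+\omega_2\otimes\omega_2+L\,\omega\otimes\omega$ (so $X_1,X_2,\widetilde X_3:=L^{-1/2}X_3$ is orthonormal) with Levi-Civita connection $\nabla^L$. A regular surface is a Euclidean $C^2$-smooth compact oriented surface $\Sigma_1=\{u=0\}$, $u$ Euclidean $C^2$ with nonvanishing Euclidean gradient. Put $p=X_1u$, $q=X_2u$, $r=\widetilde X_3u$, $l=\sqrt{p^2+q^2}$, $l_L=\sqrt{p^2+q^2+r^2}$, $\bar p=p/l$, $\bar q=q/l$, $\bar r_L=r/l_L$; non-characteristic means $l\ne0$. There $e_1=\bar qX_1-\bar pX_2$, $e_2=\bar r_L\bar pX_1+\bar r_L\bar qX_2-\frac l{l_L}\widetilde X_3$ is an orthonormal tangent frame of $\Sigma_1$, and $J_L$ is the linear map on $T\Sigma_1$ with $J_L(e_1)=e_2$, $J_L(e_2)=-e_1$. $\nabla^{\Sigma_1,L}_UV$ is the $g_L$-orthogonal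 projection of $\nabla^L_UV$ onto $T\Sigma_1$. The signed geodesic curvature is $k^{L,s}_{\gamma,\Sigma_1}=\langle\nabla^{\Sigma_1,L}_{\dot\gamma}\dot\gamma,J_L(\dot\gamma)\rangle_L/\|\dot\gamma\|_L^3$, and $k^{\infty,s}_{\gamma,\Sigma_1}:=\lim_{L\to+\infty}k^{L,s}_{\gamma,\Sigma_1}$ when it exists. *)

theory Defs
  imports "HOL-Analysis.Analysis"
begin

text \<open>Model of E(1,1) on real^3; coordinates x$1, x$2, x$3.\<close>

type_synonym pt = "real ^ 3"

definition X1 :: "pt \<Rightarrow> pt" where
  "X1 x = vector [0, 0, 1]"
definition X2 :: "pt \<Rightarrow> pt" where
  "X2 x = (1 / sqrt 2) *\<^sub>R vector [- exp (x$3), exp (- x$3), 0]"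
definition X3 :: "pt \<Rightarrow> pt" where
  "X3 x = (- 1 / sqrt 2) *\<^sub>R vector [exp (x$3), exp (- x$3), 0]"

definition om1 :: "pt \<Rightarrow> pt \<Rightarrow> real" where
  "om1 x v = v$3"
definition om2 :: "pt \<Rightarrow> pt \<Rightarrow> real" where
  "om2 x v = (1 / sqrt 2) * (- exp (- x$3) * v$1 + exp (x$3) * v$2)"
definition om :: "pt \<Rightarrow> pt \<Rightarrow> real" where
  "om x v = (- 1 / sqrt 2) * (exp (- x$3) * v$1 + exp (x$3) * v$2)"

definition gL :: "real \<Rightarrow> pt \<Rightarrow> pt \<Rightarrow> pt \<Rightarrow> real" where
  "gL L x v w = om1 x v * om1 x w + om2 x v * om2 x w + L * om x v * om x w"

text \<open>The g_L-orthonormal frame X1, X2, X3~ = L^(-1/2) X3, indexed 1,2,3.\<close>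
definition EL :: "real \<Rightarrow> nat \<Rightarrow> pt \<Rightarrow> pt" where
  "EL L i x = (if i = 1 then X1 x else if i = 2 then X2 x else (1 / sqrt L) *\<^sub>R X3 x)"

definition lie :: "(pt \<Rightarrow> pt) \<Rightarrow> (pt \<Rightarrow> pt) \<Rightarrow> pt \<Rightarrow> pt" where
  "lie X Y x = frechet_derivative Y (at x) (X x) - frechet_derivative X (at x) (Y x)"

text \<open>Levi-Civita connection coefficients g_L(nabla_{E_i} E_j, E_k) via the Koszul formula
  for an orthonormal frame.\<close>
definition strc :: "real \<Rightarrow> nat \<Rightarrow> nat \<Rightarrow> nat \<Rightarrow> pt \<Rightarrow> real" where
  "strc L i j k x = gL L x (lie (EL L i) (EL L j) x) (EL L k x)"
definition Gam :: "real \<Rightarrow> nat \<Rightarrow> nat \<Rightarrow> nat \<Rightarrow> pt \<Rightarrow> real" where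
  "Gam L i j k x = (strc L i j k x - strc L i k j x - strc L j k i x) / 2"

definition vel :: "(real \<Rightarrow> pt) \<Rightarrow> real \<Rightarrow> real \<Rightarrow> real \<Rightarrow> pt" where
  "vel \<gamma> a b s = vector_derivative \<gamma> (at s within {a..b})"

definition coef :: "real \<Rightarrow> (real \<Rightarrow> pt) \<Rightarrow> real \<Rightarrow> real \<Rightarrow> nat \<Rightarrow> real \<Rightarrow> real" where
  "coef L \<gamma> a b k s = gL L (\<gamma> s) (vel \<gamma> a b s) (EL L k (\<gamma> s))"

definition covacc :: "real \<Rightarrow> (real \<Rightarrow> pt) \<Rightarrow> real \<Rightarrow> real \<Rightarrow> real \<Rightarrow> pt" where
  "covacc L \<gamma> a b t = (\<Sum>k\<in>{1..3::nat}.
     (vector_derivative (coef L \<gamma> a b k) (at t within {a..b})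
      + (\<Sum>i\<in>{1..3::nat}. \<Sum>j\<in>{1..3::nat}.
           coef L \<gamma> a b i t * coef L \<gamma> a b j t * Gam L i j k (\<gamma> t)))
     *\<^sub>R EL L k (\<gamma> t))"

text \<open>Surface quantities for Sigma_1 = {u = 0}.\<close>
definition pf :: "(pt \<Rightarrow> real) \<Rightarrow> pt \<Rightarrow> real" where
  "pf u x = frechet_derivative u (at x) (X1 x)"
definition qf :: "(pt \<Rightarrow> real) \<Rightarrow> pt \<Rightarrow> real" where
  "qf u x = frechet_derivative u (at x) (X2 x)"
definition rf :: "real \<Rightarrow> (pt \<Rightarrow> real) \<Rightarrow> pt \<Rightarrow> real" where
  "rf L u x = frechet_derivative u (at x) ((1 / sqrt L) *\<^sub>R X3 x)"
definition lf :: "(pt \<Rightarrow> real) \<Rightarrow> pt \<Rightarrow> real" where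
  "lf u x = sqrt ((pf u x)\<^sup>2 + (qf u x)\<^sup>2)"
definition lLf :: "real \<Rightarrow> (pt \<Rightarrow> real) \<Rightarrow> pt \<Rightarrow> real" where
  "lLf L u x = sqrt ((pf u x)\<^sup>2 + (qf u x)\<^sup>2 + (rf L u x)\<^sup>2)"
definition pbar :: "(pt \<Rightarrow> real) \<Rightarrow> pt \<Rightarrow> real" where
  "pbar u x = pf u x / lf u x"
definition qbar :: "(pt \<Rightarrow> real) \<Rightarrow> pt \<Rightarrow> real" where
  "qbar u x = qf u x / lf u x"
definition rbarL :: "real \<Rightarrow> (pt \<Rightarrow> real) \<Rightarrow> pt \<Rightarrow> real" where
  "rbarL L u x = rf L u x / lLf L u x"

definition e1 :: "(pt \<Rightarrow> real) \<Rightarrow> pt \<Rightarrow> pt" where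
  "e1 u x = qbar u x *\<^sub>R X1 x - pbar u x *\<^sub>R X2 x"
definition e2 :: "real \<Rightarrow> (pt \<Rightarrow> real) \<Rightarrow> pt \<Rightarrow> pt" where
  "e2 L u x = (rbarL L u x * pbar u x) *\<^sub>R X1 x + (rbarL L u x * qbar u x) *\<^sub>R X2 x
              - (lf u x / lLf L u x) *\<^sub>R ((1 / sqrt L) *\<^sub>R X3 x)"

text \<open>g_L-orthogonal projection onto T Sigma_1 (spanned by the orthonormal e1, e2) and J_L.\<close>
definition projT :: "real \<Rightarrow> (pt \<Rightarrow> real) \<Rightarrow> pt \<Rightarrow> pt \<Rightarrow> pt" where
  "projT L u x V = gL L x V (e1 u x) *\<^sub>R e1 u x + gL L x V (e2 L u x) *\<^sub>R e2 L u x"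
definition JL :: "real \<Rightarrow> (pt \<Rightarrow> real) \<Rightarrow> pt \<Rightarrow> pt \<Rightarrow> pt" where
  "JL L u x v = gL L x v (e1 u x) *\<^sub>R e2 L u x - gL L x v (e2 L u x) *\<^sub>R e1 u x"

definition kLs :: "real \<Rightarrow> (pt \<Rightarrow> real) \<Rightarrow> (real \<Rightarrow> pt) \<Rightarrow> real \<Rightarrow> real \<Rightarrow> real \<Rightarrow> real" where
  "kLs L u \<gamma> a b t =
     gL L (\<gamma> t) (projT L u (\<gamma> t) (covacc L \<gamma> a b t)) (JL L u (\<gamma> t) (vel \<gamma> a b t))
     / (sqrt (gL L (\<gamma> t) (vel \<gamma> a b t) (vel \<gamma> a b t))) ^ 3"

definition egrad :: "(pt \<Rightarrow> real) \<Rightarrow> pt \<Rightarrow> pt" where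
  "egrad u x = (\<chi> i. frechet_derivative u (at x) (axis i 1))"

definition C2_fun :: "(pt \<Rightarrow> real) \<Rightarrow> bool" where
  "C2_fun u \<longleftrightarrow> (\<forall>x. u differentiable (at x)) \<and> (\<forall>x. egrad u differentiable (at x))
     \<and> (\<forall>j. continuous_on UNIV (\<lambda>y. frechet_derivative (egrad u) (at y) (axis j 1)))"

definition C2_curve :: "(real \<Rightarrow> pt) \<Rightarrow> real \<Rightarrow> real \<Rightarrow> bool" where
  "C2_curve \<gamma> a b \<longleftrightarrow> (\<exists>d1 d2. (\<forall>s\<in>{a..b}.
       (\<gamma> has_vector_derivative d1 s) (at s within {a..b})
     \<and> (d1 has_vector_derivative d2 s) (at s within {a..b}))
     \<and> continuous_on {a..b} d2)"

end

theory Submission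
  imports Defs "HOL-Real_Asymp.Real_Asymp"
begin


lemma s2: "sqrt 2 * sqrt 2 = (2::real)" by simp

lemma frame_om [simp]:
  "om1 x (X1 x) = 1" "om2 x (X1 x) = 0" "om x (X1 x) = 0"
  "om1 x (X2 x) = 0" "om2 x (X2 x) = 1" "om x (X2 x) = 0"
  "om1 x (X3 x) = 0" "om2 x (X3 x) = 0" "om x (X3 x) = 1"
  by (simp_all add: om1_def om2_def om_def X1_def X2_def X3_def field_simps exp_minus s2)

lemma om_lin [simp]:
  "om1 x (v + w) = om1 x v + om1 x w" "om2 x (v + w) = om2 x v + om2 x w" "om x (v + w) = om x v + om x w"
  "om1 x (v - w) = om1 x v - om1 x w" "om2 x (v - w) = om2 x v - om2 x w" "om x (v - w) = om x v - om x w"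
  "om1 x (c *\<^sub>R v) = c * om1 x v" "om2 x (c *\<^sub>R v) = c * om2 x v" "om x (c *\<^sub>R v) = c * om x v"
  "om1 x 0 = 0" "om2 x 0 = 0" "om x 0 = 0"
  "om1 x (- v) = - om1 x v" "om2 x (- v) = - om2 x v" "om x (- v) = - om x v"
  by (simp_all add: om1_def om2_def om_def algebra_simps)

lemma om_sum [simp]:
  "om1 x (sum f A) = (\<Sum>k\<in>A. om1 x (f k))" "om2 x (sum f A) = (\<Sum>k\<in>A. om2 x (f k))"
  "om x (sum f A) = (\<Sum>k\<in>A. om x (f k))"
  by (induct A rule: infinite_finite_induct, simp_all)+

lemma frame_decomp: "v = om1 x v *\<^sub>R X1 x + om2 x v *\<^sub>R X2 x + om x v *\<^sub>R X3 x"
  by (simp add: vec_eq_iff forall_3 om1_def om2_def om_def X1_def X2_def X3_def field_simps exp_minus s2)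

lemma X3_comp3 [simp]: "X1 x $ 3 = 1" "X2 x $ 3 = 0" "X3 x $ 3 = 0"
  by (simp_all add: X1_def X2_def X3_def)

lemma axis_vec: "X2 = (\<lambda>y. (- exp (y$3) / sqrt 2) *\<^sub>R axis 1 1 + (exp (- y$3) / sqrt 2) *\<^sub>R axis 2 1)"
   "X3 = (\<lambda>y. (- exp (y$3) / sqrt 2) *\<^sub>R axis 1 1 + (- exp (- y$3) / sqrt 2) *\<^sub>R axis 2 1)"
  by (auto simp: fun_eq_iff vec_eq_iff forall_3 X2_def X3_def axis_def)

lemma d3: "((\<lambda>y::pt. y$3) has_derivative (\<lambda>h. h$3)) (at x)"
  by (rule bounded_linear_imp_has_derivative[OF bounded_linear_vec_nth])

lemma dexp1: "((\<lambda>y::pt. c * exp (y$3)) has_derivative (\<lambda>h. c * exp (x$3) * h$3)) (at x)"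
  by (rule has_derivative_eq_rhs, (rule derivative_eq_intros d3 refl)+, auto simp: fun_eq_iff)
lemma dexp2: "((\<lambda>y::pt. c * exp (- y$3)) has_derivative (\<lambda>h. - c * exp (- x$3) * h$3)) (at x)"
  by (rule has_derivative_eq_rhs, (rule derivative_eq_intros d3 refl)+, auto simp: fun_eq_iff)

lemma axis_vec2: "X2 = (\<lambda>y. ((- 1 / sqrt 2) * exp (y$3)) *\<^sub>R axis 1 1 + ((1/ sqrt 2) * exp (- y$3)) *\<^sub>R axis 2 1)"
   "X3 = (\<lambda>y. ((- 1 / sqrt 2) * exp (y$3)) *\<^sub>R axis 1 1 + ((- 1/ sqrt 2) * exp (- y$3)) *\<^sub>R axis 2 1)"
  by (auto simp: fun_eq_iff vec_eq_iff forall_3 X2_def X3_def axis_def)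

lemma dX2: "(X2 has_derivative (\<lambda>h. h$3 *\<^sub>R X3 x)) (at x)"
  unfolding axis_vec2(1)
  apply (rule has_derivative_eq_rhs)
   apply (rule has_derivative_add has_derivative_scaleR_left dexp1 dexp2)+
  apply (auto simp: fun_eq_iff vec_eq_iff forall_3 X3_def axis_def field_simps)
  done

lemma dX3: "(X3 has_derivative (\<lambda>h. h$3 *\<^sub>R X2 x)) (at x)"
  unfolding axis_vec2(2)
  apply (rule has_derivative_eq_rhs)
   apply (rule has_derivative_add has_derivative_scaleR_left dexp1 dexp2)+
  apply (auto simp: fun_eq_iff vec_eq_iff forall_3 X2_def axis_def field_simps)
  done


definition YL :: "real \<Rightarrow> nat \<Rightarrow> pt \<Rightarrow> pt" where
  "YL L j x = (if j = 1 then 0 else if j = 2 then X3 x else (1 / sqrt L) *\<^sub>R X2 x)"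

lemma EL_fun: "EL L j = (if j = 1 then X1 else if j = 2 then X2 else (\<lambda>x. (1 / sqrt L) *\<^sub>R X3 x))"
  by (auto simp: fun_eq_iff EL_def)

lemma dEL: "(EL L j has_derivative (\<lambda>h. h$3 *\<^sub>R YL L j x)) (at x)"
proof -
  have c: "X1 = (\<lambda>_. vector [0,0,1])" by (simp add: fun_eq_iff X1_def)
  show ?thesis
  proof (cases "j = 1")
    case True then show ?thesis unfolding EL_fun YL_def c by (simp add: has_derivative_const)
  next
    case False
    show ?thesis
    proof (cases "j = 2")
      case True then show ?thesis using dX2 unfolding EL_fun YL_def by simp
    next
      case False
      then have e: "EL L j = (\<lambda>x. (1 / sqrt L) *\<^sub>R X3 x)" "YL L j x = (1 / sqrt L) *\<^sub>R X2 x"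
        using \<open>j \<noteq> 1\<close> unfolding EL_fun YL_def by auto
      show ?thesis unfolding e
        by (rule has_derivative_eq_rhs, rule has_derivative_scaleR_right, rule dX3, auto)
    qed
  qed
qed

lemma fdEL: "frechet_derivative (EL L j) (at x) h = h$3 *\<^sub>R YL L j x"
  using frechet_derivative_at[OF dEL] by metis

lemma EL3: "(EL L i x)$3 = (if i = 1 then 1 else 0)"
  by (simp add: EL_def)

lemma lie_EL: "lie (EL L i) (EL L j) x = (EL L i x)$3 *\<^sub>R YL L j x - (EL L j x)$3 *\<^sub>R YL L i x"
  by (simp add: lie_def fdEL)

lemma I3: "{1..3::nat} = {1,2,3}" by auto

lemma Nsum:
  assumes "L > 0"
  shows "(\<Sum>i\<in>{1..3::nat}. \<Sum>j\<in>{1..3::nat}. c i * c j * Gam L i j 1 x) = c 2 * c 3 * (sqrt L + 1 / sqrt L)"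
    "(\<Sum>i\<in>{1..3::nat}. \<Sum>j\<in>{1..3::nat}. c i * c j * Gam L i j 2 x) = - c 1 * c 3 * sqrt L"
    "(\<Sum>i\<in>{1..3::nat}. \<Sum>j\<in>{1..3::nat}. c i * c j * Gam L i j 3 x) = - c 1 * c 2 / sqrt L"
  using assms unfolding I3
  by (simp_all add: Gam_def strc_def lie_EL EL3 YL_def EL_def gL_def field_simps)


lemma s2': "sqrt 2 / 2 = 1 / (sqrt 2::real)"
  by (simp add: field_simps)

lemma gL_pj: "gL L x (al *\<^sub>R E + be *\<^sub>R F) (ga *\<^sub>R F - de *\<^sub>R E)
   = al * ga * gL L x E F - al * de * gL L x E E + be * ga * gL L x F F - be * de * gL L x F E"
  by (simp add: gL_def algebra_simps)

lemma I3': "(\<Sum>k\<in>{1..3::nat}. f k) = f 1 + f 2 + f 3"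
  unfolding I3 by (simp add: add.assoc)

definition mm :: "real \<Rightarrow> real \<Rightarrow> real \<Rightarrow> real" where
  "mm l s e = sqrt (l^2 + s^2 * e^2)"

definition Gnum :: "real \<Rightarrow> real \<Rightarrow> real \<Rightarrow> real \<Rightarrow> real \<Rightarrow> real \<Rightarrow> real \<Rightarrow> real \<Rightarrow> real \<Rightarrow> real \<Rightarrow> real \<Rightarrow> real" where
  "Gnum pb qb l s a1 a2 a3 d1 d2 w e =
   (qb*a1 - pb*a2) * ((s*e^2/mm l s e)*(pb*(e^2*d1+(1+e^2)*a2*a3) + qb*(e^2*d2-a1*a3)) - e^2*(w - a1*a2*e^2)*l/mm l s e)
   - ((s*e^2/mm l s e)*(pb*a1+qb*a2) - a3*l/mm l s e) * (qb*(e^2*d1+(1+e^2)*a2*a3) - pb*(e^2*d2-a1*a3))"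

lemma alg:
  fixes e m :: real
  assumes "e > 0" "m = mm l s e" "m > 0"
   "C1 = d1 + a2*(a3/e)*(1/e + e)" "C2 = d2 - a1*(a3/e)*(1/e)" "C3 = ((1/e) * w - a1*a2*e) * e"
  shows "e^3 * ((C1 * (s*e/m) * pb + C2 * (s*e/m) * qb + (1/e^2) * C3 * (-(l/m) * e)) * (a1*qb - a2*pb)
     - (C1 * qb - C2 * pb) * (a1*(s*e/m)*pb + a2*(s*e/m)*qb + (1/e^2)*a3*(-(l/m)*e)))
   = Gnum pb qb l s a1 a2 a3 d1 d2 w e"
  using assms(1,3) unfolding Gnum_def assms(2,4,5,6)
  by (simp add: field_simps power2_eq_square power3_eq_cube)

lemma mm_pos: "l \<noteq> 0 \<Longrightarrow> mm l s e > 0"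
  by (simp add: mm_def add_pos_nonneg)
lemma isCont_mm: "isCont (\<lambda>e. mm l s e) x"
  unfolding mm_def by (intro continuous_intros)
lemma Gnum_cont: "l \<noteq> 0 \<Longrightarrow> isCont (\<lambda>e. Gnum pb qb l s a1 a2 a3 d1 d2 w e) x"
  unfolding Gnum_def
  by (intro continuous_intros isCont_mm) (simp_all add: mm_pos[THEN less_imp_neq, symmetric])

lemma GH2: "Gnum pb qb l s a1 a2 0 d1 d2 0 e = e^3 * ((qb*a1 - pb*a2)*((s*e/mm l s e)*(pb*d1+qb*d2) + e*a1*a2*l/mm l s e)
        - (s*e/mm l s e)*(pb*a1+qb*a2)*(qb*d1 - pb*d2))"
  unfolding Gnum_def by (simp add: divide_inverse algebra_simps power2_eq_square power3_eq_cube)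
lemma GH3: "Gnum pb qb l s a1 a2 0 d1 d2 w e = e^2 * ((qb*a1 - pb*a2)*((s*e^2/mm l s e)*(pb*d1+qb*d2) - (w - a1*a2*e^2)*l/mm l s e)
        - (s*e^2/mm l s e)*(pb*a1+qb*a2)*(qb*d1 - pb*d2))"
  unfolding Gnum_def by (simp add: divide_inverse algebra_simps power2_eq_square power3_eq_cube)
lemma canc3: "(L::real) > 0 \<Longrightarrow> (1/sqrt L)^3 * h / ((1/sqrt L) * S0)^3 = h / S0^3"
  by (simp add: power_mult_distrib power_divide field_simps power3_eq_cube power2_eq_square)
lemma canc2: "(L::real) > 0 \<Longrightarrow> ((1/sqrt L)^2 * h / ((1/sqrt L) * S0)^3) / sqrt L = h / S0^3"
  by (simp add: power_mult_distrib power_divide field_simps power3_eq_cube power2_eq_square)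


lemma eps0: "((\<lambda>L::real. 1 / sqrt L) \<longlongrightarrow> 0) at_top"
  by real_asymp

theorem lemma6p2:
  fixes u :: "real ^ 3 \<Rightarrow> real" and \<gamma> :: "real \<Rightarrow> real ^ 3" and a b t :: real
  assumes u_C2: "C2_fun u"
    and compact_surf: "compact {x. u x = 0}"
    and grad_nz: "\<And>x. u x = 0 \<Longrightarrow> egrad u x \<noteq> 0"
    and ab: "a < b"
    and gamma_C2: "C2_curve \<gamma> a b"
    and gamma_reg: "\<And>s. s \<in> {a..b} \<Longrightarrow> vel \<gamma> a b s \<noteq> 0"
    and gamma_on: "\<And>s. s \<in> {a..b} \<Longrightarrow> u (\<gamma> s) = 0"
    and t_in: "t \<in> {a..b}"
    and noncharact: "lf u (\<gamma> t) \<noteq> 0"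
  defines "B \<equiv> - exp (- (\<gamma> t)$3) * (vel \<gamma> a b t)$1 + exp ((\<gamma> t)$3) * (vel \<gamma> a b t)$2"
    and "W \<equiv> \<lambda>s. - (sqrt 2 / 2) * (exp (- (\<gamma> s)$3) * (vel \<gamma> a b s)$1
                                   + exp ((\<gamma> s)$3) * (vel \<gamma> a b s)$2)"
    and "W' \<equiv> vector_derivative (\<lambda>s. - (sqrt 2 / 2) * (exp (- (\<gamma> s)$3) * (vel \<gamma> a b s)$1
                                   + exp ((\<gamma> s)$3) * (vel \<gamma> a b s)$2)) (at t within {a..b})"
    and "pb \<equiv> pbar u (\<gamma> t)" and "qb \<equiv> qbar u (\<gamma> t)"
  shows
    "(W t \<noteq> 0 \<longrightarrow>
        ((\<lambda>L. kLs L u \<gamma> a b t) \<longlongrightarrow>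
           (pb * (vel \<gamma> a b t)$3 + (sqrt 2 / 2) * qb * B) / \<bar>W t\<bar>) at_top)
     \<and> (W t = 0 \<and> W' = 0 \<longrightarrow> ((\<lambda>L. kLs L u \<gamma> a b t) \<longlongrightarrow> 0) at_top)
     \<and> (W t = 0 \<and> W' \<noteq> 0 \<longrightarrow>
        ((\<lambda>L. kLs L u \<gamma> a b t / sqrt L) \<longlongrightarrow>
           ((- qb * (vel \<gamma> a b t)$3 + (sqrt 2 / 2) * pb * B) * W')
             / \<bar>qb * (vel \<gamma> a b t)$3 - (sqrt 2 / 2) * pb * B\<bar> ^ 3) at_top)"
proof -
  obtain d1f d2f where der: "\<And>s. s\<in>{a..b} \<Longrightarrow> (\<gamma> has_vector_derivative d1f s) (at s within {a..b})"
     "\<And>s. s\<in>{a..b} \<Longrightarrow> (d1f has_vector_derivative d2f s) (at s within {a..b})"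
    using gamma_C2 unfolding C2_curve_def by blast
  have velD: "\<And>s. s\<in>{a..b} \<Longrightarrow> vel \<gamma> a b s = d1f s"
    using der(1) ab by (simp add: vel_def vector_derivative_within_closed_interval)
  define x where "x = \<gamma> t"
  define v where "v = vel \<gamma> a b t"
  define a1 where "a1 = om1 x v"
  define a2 where "a2 = om2 x v"
  define a3 where "a3 = om x v"
  define p where "p = pf u x"
  define q where "q = qf u x"
  define s where "s = frechet_derivative u (at x) (X3 x)"
  define l where "l = lf u x"
  have l_def': "l = sqrt (p^2 + q^2)" by (simp add: l_def lf_def p_def q_def)
  have "l \<ge> 0" using l_def' by simp
  moreover have "l \<noteq> 0" using noncharact by (simp add: l_def x_def)
  ultimately have lpos: "l > 0" by simp
  have l2: "l^2 = p^2 + q^2" using l_def' by simp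
  have pb: "pb = p / l" and qb: "qb = q / l"
    by (simp_all add: pb_def qb_def pbar_def qbar_def p_def q_def l_def x_def)
  have "pb^2 + qb^2 = (p^2+q^2)/l^2" by (simp add: pb qb power_divide add_divide_distrib)
  also have "\<dots> = 1" using lpos l2 by (metis divide_self less_numeral_extra(3) zero_less_power)
  finally have pq1: "pb^2 + qb^2 = 1" .
  have Wom: "W = (\<lambda>s. om (\<gamma> s) (vel \<gamma> a b s))" by (simp add: W_def om_def fun_eq_iff s2')
  have Wt: "W t = a3" by (simp add: Wom a3_def x_def v_def)
  have v3: "v $ 3 = a1" by (simp add: a1_def om1_def)
  have Bv: "sqrt 2 / 2 * B = a2" by (simp add: B_def a2_def om2_def s2' x_def v_def)
  have W'def: "W' = vector_derivative W (at t within {a..b})" by (simp add: W'_def W_def)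
  have Wder: "(W has_vector_derivative W') (at t within {a..b})"
  proof -
    define W2 where "W2 = (\<lambda>s. (-1/sqrt 2) * (exp (- (\<gamma> s $ 3)) * (d1f s $ 1) + exp (\<gamma> s $ 3) * (d1f s $ 2)))"
    have g3: "((\<lambda>s. \<gamma> s $ 3) has_real_derivative d1f t $ 3) (at t within {a..b})"
      using bounded_linear.has_vector_derivative[OF bounded_linear_vec_nth der(1)[OF t_in]]
      by (simp add: has_real_derivative_iff_has_vector_derivative)
    have c1: "((\<lambda>s. d1f s $ 1) has_real_derivative d2f t $ 1) (at t within {a..b})"
      using bounded_linear.has_vector_derivative[OF bounded_linear_vec_nth der(2)[OF t_in]]
      by (simp add: has_real_derivative_iff_has_vector_derivative)
    have c2: "((\<lambda>s. d1f s $ 2) has_real_derivative d2f t $ 2) (at t within {a..b})"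
      using bounded_linear.has_vector_derivative[OF bounded_linear_vec_nth der(2)[OF t_in]]
      by (simp add: has_real_derivative_iff_has_vector_derivative)
    have "\<exists>D. (W2 has_real_derivative D) (at t within {a..b})"
    proof -
      have e1: "((\<lambda>s. exp (- (\<gamma> s $ 3))) has_real_derivative exp (- (\<gamma> t $ 3)) * (- (d1f t $ 3))) (at t within {a..b})"
        by (rule DERIV_chain2[OF DERIV_exp DERIV_minus[OF g3]])
      have e2: "((\<lambda>s. exp (\<gamma> s $ 3)) has_real_derivative exp (\<gamma> t $ 3) * (d1f t $ 3)) (at t within {a..b})"
        by (rule DERIV_chain2[OF DERIV_exp g3])
      show ?thesis unfolding W2_def by (rule exI, rule DERIV_cmult, rule DERIV_add, rule DERIV_mult[OF e1 c1], rule DERIV_mult[OF e2 c2])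
    qed
    then obtain D where D: "(W2 has_vector_derivative D) (at t within {a..b})"
      by (auto simp: has_real_derivative_iff_has_vector_derivative)
    have "(W has_vector_derivative D) (at t within {a..b})"
      by (rule has_vector_derivative_transform[OF t_in _ D]) (simp add: Wom W2_def velD om_def)
    then show ?thesis using W'def vector_derivative_within_closed_interval[OF ab t_in] by metis
  qed
  have udiff: "(u has_derivative frechet_derivative u (at x)) (at x)"
    using u_C2 by (simp add: C2_fun_def frechet_derivative_works[symmetric])
  have lin: "linear (frechet_derivative u (at x))" using udiff has_derivative_linear by blast
  have rf: "\<And>L. rf L u x = s / sqrt L" by (simp add: rf_def s_def linear_cmul[OF lin])
  have tang0: "frechet_derivative u (at x) v = 0"
  proof -
    have h1: "((u \<circ> \<gamma>) has_derivative (frechet_derivative u (at x) \<circ> (\<lambda>h. h *\<^sub>R d1f t))) (at t within {a..b})"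
      using diff_chain_within[OF der(1)[OF t_in, unfolded has_vector_derivative_def]
          has_derivative_at_withinI[OF udiff[unfolded x_def]]] x_def by simp
    have "((u \<circ> \<gamma>) has_vector_derivative frechet_derivative u (at x) (d1f t)) (at t within {a..b})"
      unfolding has_vector_derivative_def
      by (rule has_derivative_eq_rhs[OF h1]) (simp add: fun_eq_iff linear_cmul[OF lin])
    moreover have "((u \<circ> \<gamma>) has_vector_derivative 0) (at t within {a..b})"
      by (rule has_vector_derivative_transform[OF t_in _ has_vector_derivative_const]) (simp add: gamma_on)
    ultimately show ?thesis using vector_derivative_within_closed_interval[OF ab t_in] velD[OF t_in] v_def
      by metis
  qed
  have tang: "a1 * p + a2 * q + a3 * s = 0"
  proof -
    have "frechet_derivative u (at x) v = frechet_derivative u (at x) (a1 *\<^sub>R X1 x + a2 *\<^sub>R X2 x + a3 *\<^sub>R X3 x)"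
      unfolding a1_def a2_def a3_def using frame_decomp by metis
    then show ?thesis using tang0
      by (simp add: linear_add[OF lin] linear_cmul[OF lin] p_def q_def s_def pf_def qf_def)
  qed
  have vnz: "v \<noteq> 0" using gamma_reg[OF t_in] v_def by simp
  have anz: "a1^2 + a2^2 + a3^2 > 0"
  proof (rule ccontr)
    assume "\<not> ?thesis"
    then have h: "a1^2 + a2^2 + a3^2 \<le> 0" by simp
    have "a1^2 \<le> 0" "a2^2 \<le> 0" "a3^2 \<le> 0"
      using h zero_le_power2[of a1] zero_le_power2[of a2] zero_le_power2[of a3] by linarith+
    then have "a1 = 0" "a2 = 0" "a3 = 0" by simp_all
    moreover have "v = a1 *\<^sub>R X1 x + a2 *\<^sub>R X2 x + a3 *\<^sub>R X3 x"
      unfolding a1_def a2_def a3_def by (rule frame_decomp)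
    ultimately show False using vnz by simp
  qed
  define d1 where "d1 = vector_derivative (\<lambda>s. om1 (\<gamma> s) (vel \<gamma> a b s)) (at t within {a..b})"
  define d2 where "d2 = vector_derivative (\<lambda>s. om2 (\<gamma> s) (vel \<gamma> a b s)) (at t within {a..b})"
  define S where "S = (\<lambda>e::real. sqrt ((a1^2+a2^2)*e^2 + a3^2))"
  have key: "kLs L u \<gamma> a b t = Gnum pb qb l s a1 a2 a3 d1 d2 W' (1/sqrt L) / (S (1/sqrt L))^3"
    if L: "L > 0" for L
  proof -
    define e where "e = 1 / sqrt L"
    have e: "e > 0" "sqrt L = 1/e" "L = 1/e^2" using L by (simp_all add: e_def power_divide)
    have hL: "\<And>X. L * X / sqrt L = sqrt L * X" "\<And>X. L * (X / sqrt L) = sqrt L * X"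
      using L by (simp_all add: real_div_sqrt mult.commute[of L] times_divide_eq_right[symmetric] del: times_divide_eq_right)
    have c1: "coef L \<gamma> a b 1 = (\<lambda>s. om1 (\<gamma> s) (vel \<gamma> a b s))" by (simp add: fun_eq_iff coef_def gL_def EL_def)
    have c2: "coef L \<gamma> a b 2 = (\<lambda>s. om2 (\<gamma> s) (vel \<gamma> a b s))" by (simp add: fun_eq_iff coef_def gL_def EL_def)
    have c3: "coef L \<gamma> a b 3 = (\<lambda>s. sqrt L * W s)"
      by (simp add: fun_eq_iff coef_def gL_def EL_def Wom hL)
    have vd1: "vector_derivative (coef L \<gamma> a b 1) (at t within {a..b}) = d1" unfolding c1 d1_def by (rule refl)
    have vd2: "vector_derivative (coef L \<gamma> a b 2) (at t within {a..b}) = d2" unfolding c2 d2_def by (rule refl)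
    have vd3: "vector_derivative (coef L \<gamma> a b 3) (at t within {a..b}) = sqrt L * W'"
      unfolding c3 by (rule vector_derivative_within_closed_interval[OF ab t_in])
         (rule has_vector_derivative_mult_right[OF Wder])
    have ct: "coef L \<gamma> a b 1 t = a1" "coef L \<gamma> a b 2 t = a2" "coef L \<gamma> a b 3 t = sqrt L * a3"
      unfolding c1 c2 c3 by (simp_all add: Wom a1_def a2_def a3_def x_def v_def)
    have ct1': "coef L \<gamma> a b (Suc 0) t = a1" using ct(1) by simp
    define NS where "NS = (\<lambda>k. (\<Sum>i\<in>{1..3::nat}. \<Sum>j\<in>{1..3::nat}. coef L \<gamma> a b i t * coef L \<gamma> a b j t * Gam L i j k (\<gamma> t)))"
    have N1: "NS 1 = a2 * (sqrt L * a3) * (sqrt L + 1 / sqrt L)"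
      using Nsum(1)[OF L, of "\<lambda>i. coef L \<gamma> a b i t" "\<gamma> t"] ct ct1' by (simp add: NS_def)
    have N2: "NS 2 = - a1 * (sqrt L * a3) * sqrt L"
      using Nsum(2)[OF L, of "\<lambda>i. coef L \<gamma> a b i t" "\<gamma> t"] ct ct1' by (simp add: NS_def)
    have N3: "NS 3 = - a1 * a2 / sqrt L"
      using Nsum(3)[OF L, of "\<lambda>i. coef L \<gamma> a b i t" "\<gamma> t"] ct ct1' by (simp add: NS_def)
    have covE: "covacc L \<gamma> a b t = (d1 + NS 1) *\<^sub>R X1 x + (d2 + NS 2) *\<^sub>R X2 x + (sqrt L * W' + NS 3) *\<^sub>R ((1/sqrt L) *\<^sub>R X3 x)"
    proof -
      have "covacc L \<gamma> a b t = (\<Sum>k\<in>{1..3::nat}. (vector_derivative (coef L \<gamma> a b k) (at t within {a..b}) + NS k) *\<^sub>R EL L k (\<gamma> t))"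
        unfolding covacc_def NS_def by (rule refl)
      also have "\<dots> = (d1 + NS 1) *\<^sub>R X1 x + (d2 + NS 2) *\<^sub>R X2 x + (sqrt L * W' + NS 3) *\<^sub>R ((1/sqrt L) *\<^sub>R X3 x)"
        by (simp only: I3' vd1 vd2 vd3) (simp add: EL_def x_def)
      finally show ?thesis .
    qed
    have N1e: "NS 1 = a2*(a3/e)*(1/e + e)" using N1 e(2) by simp
    have N2e: "NS 2 = - a1*(a3/e)*(1/e)" using N2 e(2) by simp
    have N3e: "NS 3 = - a1*a2*e" using N3 e(2) by simp
    define C1 where "C1 = d1 + a2*(a3/e)*(1/e + e)"
    define C2 where "C2 = d2 - a1*(a3/e)*(1/e)"
    define C3 where "C3 = ((1/e) * W' - a1*a2*e) * e"
    have cc: "om1 x (covacc L \<gamma> a b t) = C1" "om2 x (covacc L \<gamma> a b t) = C2" "om x (covacc L \<gamma> a b t) = C3"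
      unfolding covE N1e N2e N3e e(2) by (simp_all add: C1_def C2_def C3_def)
    define m where "m = mm l s e"
    have mpos: "m > 0" using lpos by (simp add: m_def mm_def add_pos_nonneg)
    have lL: "lLf L u x = m"
      by (simp add: lLf_def m_def mm_def rf e(2) power_divide l2 p_def[symmetric] q_def[symmetric] power_mult_distrib)
    have m2: "m^2 = l^2 + s^2*e^2" by (simp add: m_def mm_def)
    have rb: "rbarL L u x = s*e/m" by (simp add: rbarL_def lL rf e(2))
    have pbx: "pbar u x = pb" "qbar u x = qb" by (simp_all add: pb_def qb_def x_def)
    have lx: "lf u x = l" by (simp add: l_def)
    have e1c: "om1 x (e1 u x) = qb" "om2 x (e1 u x) = - pb" "om x (e1 u x) = 0"
      by (simp_all add: e1_def pbx)
    have e2c: "om1 x (e2 L u x) = s*e/m * pb" "om2 x (e2 L u x) = s*e/m * qb" "om x (e2 L u x) = -(l/m) * e"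
      by (simp_all add: e2_def pbx rb lx lL e(2))
    have o11: "gL L x (e1 u x) (e1 u x) = 1" using pq1 by (simp add: gL_def e1c power2_eq_square add.commute)
    have o12: "gL L x (e1 u x) (e2 L u x) = 0" "gL L x (e2 L u x) (e1 u x) = 0"
      by (simp_all add: gL_def e1c e2c algebra_simps)
    have o22: "gL L x (e2 L u x) (e2 L u x) = 1"
    proof -
      have "gL L x (e2 L u x) (e2 L u x) = (s*e/m*pb)*(s*e/m*pb) + (s*e/m*qb)*(s*e/m*qb) + L*(-(l/m)*e)*(-(l/m)*e)"
        by (simp add: gL_def e2c)
      also have "\<dots> = (s^2*e^2*(pb^2+qb^2) + (L*e^2)*l^2)/m^2"
        using mpos by (simp add: field_simps power2_eq_square)
      also have "\<dots> = (s^2*e^2 + l^2)/m^2" using pq1 e by simp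
      also have "\<dots> = 1"
      proof -
        have "s^2*e^2 + l^2 = m^2" using m2 by simp
        then show ?thesis using mpos by simp
      qed
      finally show ?thesis .
    qed
    define cv where "cv = covacc L \<gamma> a b t"
    have num: "gL L x (projT L u x cv) (JL L u x v) = gL L x cv (e2 L u x) * gL L x v (e1 u x) - gL L x cv (e1 u x) * gL L x v (e2 L u x)"
      unfolding projT_def JL_def gL_pj o11 o12 o22 by simp
    have gce1: "gL L x cv (e1 u x) = C1 * qb - C2 * pb" by (simp add: gL_def cc e1c cv_def)
    have gce2: "gL L x cv (e2 L u x) = C1*(s*e/m)*pb + C2*(s*e/m)*qb + (1/e^2)*C3*(-(l/m)*e)"
    proof -
      have "gL L x cv (e2 L u x) = C1*(s*e/m*pb) + C2*(s*e/m*qb) + L*C3*(-(l/m)*e)"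
        by (simp add: gL_def cc e2c cv_def)
      then show ?thesis by (simp add: e(3) algebra_simps)
    qed
    have gv1: "gL L x v (e1 u x) = a1*qb - a2*pb"
      by (simp add: gL_def e1c a1_def a2_def algebra_simps)
    have gv2: "gL L x v (e2 L u x) = a1*(s*e/m)*pb + a2*(s*e/m)*qb + (1/e^2)*a3*(-(l/m)*e)"
    proof -
      have "gL L x v (e2 L u x) = a1*(s*e/m*pb) + a2*(s*e/m*qb) + L*a3*(-(l/m)*e)"
        by (simp add: gL_def e2c a1_def a2_def a3_def)
      then show ?thesis by (simp add: e(3) algebra_simps)
    qed
    have gvv: "gL L x v v = ((a1^2+a2^2)*e^2 + a3^2)/e^2"
    proof -
      have "gL L x v v = a1*a1 + a2*a2 + L*a3*a3" by (simp add: gL_def a1_def a2_def a3_def)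
      then show ?thesis using e(1) by (simp add: e(3) field_simps power2_eq_square)
    qed
    have sq: "sqrt (gL L x v v) = S e / e"
      unfolding gvv S_def using e(1) by (simp add: real_sqrt_divide)
    have "kLs L u \<gamma> a b t = gL L x (projT L u x cv) (JL L u x v) / (sqrt (gL L x v v))^3"
      by (simp add: kLs_def x_def v_def cv_def)
    also have "\<dots> = e^3 * (gL L x cv (e2 L u x) * gL L x v (e1 u x) - gL L x cv (e1 u x) * gL L x v (e2 L u x)) / (S e)^3"
      unfolding num sq using e(1) by (simp add: power_divide)
    also have "\<dots> = Gnum pb qb l s a1 a2 a3 d1 d2 W' e / (S e)^3"
      unfolding gce1 gce2 gv1 gv2
      by (subst alg[OF e(1) m_def mpos C1_def C2_def C3_def]) (rule refl)
    finally show ?thesis by (simp add: e_def)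
  qed
  have mmpos: "\<And>e. mm l s e > 0" using lpos by (simp add: mm_def add_pos_nonneg)
  have mm0: "mm l s 0 = l" using lpos by (simp add: mm_def)
  have evk: "\<forall>\<^sub>F L in at_top. kLs L u \<gamma> a b t = Gnum pb qb l s a1 a2 a3 d1 d2 W' (1/sqrt L) / (S (1/sqrt L))^3"
    using eventually_gt_at_top[of "0::real"] by eventually_elim (rule key)
  have tgt1: "(pb * (vel \<gamma> a b t)$3 + (sqrt 2 / 2) * qb * B) / \<bar>W t\<bar> = (pb*a1 + qb*a2) / \<bar>a3\<bar>"
    using Bv v3 Wt by (simp add: v_def mult.commute mult.left_commute)
  have tgt3: "((- qb * (vel \<gamma> a b t)$3 + (sqrt 2 / 2) * pb * B) * W') / \<bar>qb * (vel \<gamma> a b t)$3 - (sqrt 2 / 2) * pb * B\<bar> ^ 3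
      = ((pb*a2 - qb*a1) * W') / \<bar>qb*a1 - pb*a2\<bar> ^ 3"
  proof -
    have Bp: "(sqrt 2 / 2) * pb * B = pb * a2"
      using Bv by (metis mult.assoc mult.commute)
    have v3': "(vel \<gamma> a b t)$3 = a1" using v3 v_def by simp
    show ?thesis unfolding Bp v3' by (simp add: algebra_simps)
  qed
  have part1: "W t \<noteq> 0 \<longrightarrow> ((\<lambda>L. kLs L u \<gamma> a b t) \<longlongrightarrow>
           (pb * (vel \<gamma> a b t)$3 + (sqrt 2 / 2) * qb * B) / \<bar>W t\<bar>) at_top"
  proof
    assume "W t \<noteq> 0"
    then have a3nz: "a3 \<noteq> 0" using Wt by simp
    define G where "G = (\<lambda>e. Gnum pb qb l s a1 a2 a3 d1 d2 W' e / (S e)^3)"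
    have cont: "isCont G 0"
    proof -
      have contS: "isCont (\<lambda>e. (S e)^3) 0" unfolding S_def by (intro continuous_intros)
      show ?thesis unfolding G_def
        by (rule isCont_divide[OF Gnum_cont contS]) (use lpos a3nz in \<open>simp_all add: S_def\<close>)
    qed
    have G0: "G 0 = (pb*a1 + qb*a2) / \<bar>a3\<bar>"
    proof -
      have "G 0 = (a3*a3*(pb*a1 + qb*a2)) / (\<bar>a3\<bar>^3)"
        unfolding G_def Gnum_def S_def mm0 using lpos by (simp add: algebra_simps)
      also have "\<dots> = (pb*a1 + qb*a2) / \<bar>a3\<bar>"
      proof -
        have "\<bar>a3\<bar>^3 = (a3*a3)*\<bar>a3\<bar>" by (simp add: power3_eq_cube)
        then show ?thesis using a3nz by simp
      qed
      finally show ?thesis .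
    qed
    have "((\<lambda>L. G (1 / sqrt L)) \<longlongrightarrow> G 0) at_top"
      by (rule isCont_tendsto_compose[OF cont eps0])
    then have "((\<lambda>L. kLs L u \<gamma> a b t) \<longlongrightarrow> G 0) at_top"
      by (rule Lim_transform_eventually) (use evk in \<open>simp add: G_def eq_commute\<close>)
    then show "((\<lambda>L. kLs L u \<gamma> a b t) \<longlongrightarrow> (pb * (vel \<gamma> a b t)$3 + (sqrt 2 / 2) * qb * B) / \<bar>W t\<bar>) at_top"
      unfolding tgt1 G0 .
  qed
  have common: "a3 = 0 \<and> pb*a1 + qb*a2 = 0 \<and> a1^2 + a2^2 > 0 \<and> (\<forall>e>0. S e = e * sqrt (a1^2+a2^2))" if "W t = 0"
  proof -
    have a3z: "a3 = 0" using that Wt by simp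
    have "pb*a1 + qb*a2 = (a1*p + a2*q)/l" using lpos by (simp add: pb qb field_simps)
    also have "\<dots> = 0" using tang a3z by simp
    finally have "pb*a1 + qb*a2 = 0" .
    moreover have "\<forall>e>0. S e = e * sqrt (a1^2+a2^2)"
      using a3z by (simp add: S_def real_sqrt_mult)
    ultimately show ?thesis using a3z anz by simp
  qed
  have part2: "W t = 0 \<and> W' = 0 \<longrightarrow> ((\<lambda>L. kLs L u \<gamma> a b t) \<longlongrightarrow> 0) at_top"
  proof
    assume h: "W t = 0 \<and> W' = 0"
    then have a3z: "a3 = 0" and pba: "pb*a1 + qb*a2 = 0" and S0: "a1^2 + a2^2 > 0"
      and Se: "\<And>e. e > 0 \<Longrightarrow> S e = e * sqrt (a1^2+a2^2)" using common by auto
    have wz: "W' = 0" using h by simp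
    define S0 where "S0 = sqrt (a1^2+a2^2)"
    have S0p: "S0 > 0" using S0 by (simp add: S0_def)
    define H where "H = (\<lambda>e. (qb*a1 - pb*a2)*((s*e/mm l s e)*(pb*d1+qb*d2) + e*a1*a2*l/mm l s e)
        - (s*e/mm l s e)*(pb*a1+qb*a2)*(qb*d1 - pb*d2))"
    have GH: "Gnum pb qb l s a1 a2 a3 d1 d2 W' e = e^3 * H e" for e
      unfolding a3z wz H_def by (rule GH2)
    have ev: "\<forall>\<^sub>F L in at_top. H (1 / sqrt L) / S0^3 = kLs L u \<gamma> a b t"
      using evk eventually_gt_at_top[of "0::real"]
    proof eventually_elim
      case (elim L)
      have ep: "1 / sqrt L > 0" using elim(2) by simp
      show ?case unfolding elim(1) GH Se[OF ep] S0_def[symmetric]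
        by (rule canc3[OF elim(2), symmetric])
    qed
    have cont: "isCont (\<lambda>e. H e / S0^3) 0"
      unfolding H_def using lpos S0p
      by (intro continuous_intros isCont_mm) (simp_all add: mm_pos[THEN less_imp_neq, symmetric])
    have "((\<lambda>L. H (1 / sqrt L) / S0^3) \<longlongrightarrow> H 0 / S0^3) at_top"
      using isCont_tendsto_compose[OF cont eps0] by simp
    then have "((\<lambda>L. kLs L u \<gamma> a b t) \<longlongrightarrow> H 0 / S0^3) at_top"
      by (rule Lim_transform_eventually[OF _ ev])
    moreover have "H 0 = 0" by (simp add: H_def)
    ultimately show "((\<lambda>L. kLs L u \<gamma> a b t) \<longlongrightarrow> 0) at_top" by simp
  qed
  have part3: "W t = 0 \<and> W' \<noteq> 0 \<longrightarrow>
        ((\<lambda>L. kLs L u \<gamma> a b t / sqrt L) \<longlongrightarrow>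
           ((- qb * (vel \<gamma> a b t)$3 + (sqrt 2 / 2) * pb * B) * W')
             / \<bar>qb * (vel \<gamma> a b t)$3 - (sqrt 2 / 2) * pb * B\<bar> ^ 3) at_top"
  proof
    assume h: "W t = 0 \<and> W' \<noteq> 0"
    then have a3z: "a3 = 0" and pba: "pb*a1 + qb*a2 = 0" and S0: "a1^2 + a2^2 > 0"
      and Se: "\<And>e. e > 0 \<Longrightarrow> S e = e * sqrt (a1^2+a2^2)" using common by auto
    define S0 where "S0 = sqrt (a1^2+a2^2)"
    have S0p: "S0 > 0" using S0 by (simp add: S0_def)
    have "(qb*a1 - pb*a2)^2 + (pb*a1 + qb*a2)^2 = (pb^2+qb^2)*(a1^2+a2^2)"
      by (simp add: power2_eq_square algebra_simps)
    then have "a1^2+a2^2 = (qb*a1 - pb*a2)^2" using pba pq1 by simp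
    then have S0a: "S0 = \<bar>qb*a1 - pb*a2\<bar>" by (simp add: S0_def)
    define H where "H = (\<lambda>e. (qb*a1 - pb*a2)*((s*e^2/mm l s e)*(pb*d1+qb*d2) - (W' - a1*a2*e^2)*l/mm l s e)
        - (s*e^2/mm l s e)*(pb*a1+qb*a2)*(qb*d1 - pb*d2))"
    have GH: "Gnum pb qb l s a1 a2 a3 d1 d2 W' e = e^2 * H e" for e
      unfolding a3z H_def by (rule GH3)
    have ev: "\<forall>\<^sub>F L in at_top. H (1 / sqrt L) / S0^3 = kLs L u \<gamma> a b t / sqrt L"
      using evk eventually_gt_at_top[of "0::real"]
    proof eventually_elim
      case (elim L)
      have ep: "1 / sqrt L > 0" using elim(2) by simp
      show ?case unfolding elim(1) GH Se[OF ep] S0_def[symmetric]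
        by (rule canc2[OF elim(2), symmetric])
    qed
    have cont: "isCont (\<lambda>e. H e / S0^3) 0"
      unfolding H_def using lpos S0p
      by (intro continuous_intros isCont_mm) (simp_all add: mm_pos[THEN less_imp_neq, symmetric])
    have "((\<lambda>L. H (1 / sqrt L) / S0^3) \<longlongrightarrow> H 0 / S0^3) at_top"
      using isCont_tendsto_compose[OF cont eps0] by simp
    then have "((\<lambda>L. kLs L u \<gamma> a b t / sqrt L) \<longlongrightarrow> H 0 / S0^3) at_top"
      by (rule Lim_transform_eventually[OF _ ev])
    moreover have "H 0 / S0^3 = ((pb*a2 - qb*a1) * W') / \<bar>qb*a1 - pb*a2\<bar> ^ 3"
    proof -
      have "H 0 = (qb*a1 - pb*a2) * (- (W' * l / l))" by (simp add: H_def mm0)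
      also have "\<dots> = (pb*a2 - qb*a1) * W'" using lpos by (simp add: algebra_simps)
      finally show ?thesis unfolding S0a by simp
    qed
    ultimately show "((\<lambda>L. kLs L u \<gamma> a b t / sqrt L) \<longlongrightarrow>
           ((- qb * (vel \<gamma> a b t)$3 + (sqrt 2 / 2) * pb * B) * W')
             / \<bar>qb * (vel \<gamma> a b t)$3 - (sqrt 2 / 2) * pb * B\<bar> ^ 3) at_top"
      unfolding tgt3 by simp
  qed
  show ?thesis using part1 part2 part3 by blast
qed

end
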